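(* Let $\{F_y\}_{y\in P}$ be a family of $d$-IEMs on $\mathbb{S}^1$ with fixed combinatorics, elemental subintervals $J_\alpha(y)$ and translation amounts $\omega_\alpha(y)$ depending $C^1$ on $y$, let $f$ be a smooth $1$-periodic function, and $T_\varepsilon(x,y)=(F_y(x),\,y+\varepsilon f(F_y(x)))$. Let $X^*=\{(x_k^*,y_0^* )\}_{k=0}^{q-1}$, $x_k^*=F_{y_0^*}^k(x_0^* )$, be a $q$-periodic orbit of $T_0$ with $y_0^*$ in the interior of $P$ and each $x_k^*$ in the interior of an elemental subinterval $J_{\alpha_k}(y_0^* )$. Set $$M(X^* )=\Big(\sum_{k=0}^{q-1}f'(x_k^* )\Big)\Big(\sum_{k=0}^{q-1}\omega'_{\alpha_k}(y_0^* )\Big).$$ (i) If $\sum_{k=0}^{q-1}f(x_k^* )=0$ and $M(X^* )\neq 0$, then there exist $\varepsilon_0>0$ and a neighborhood $U$ of $(x_0^*,y_0^* )$ such that for every $0<|\varepsilon|<\varepsilon_0$ the map $T_\varepsilon$ has exactly one point $(x_0^\varepsilon,y_0^\varepsilon)\in U$ with $T_\varepsilon^q(x_0^\varepsilon,y_0^\varepsilon)=(x_0^\varepsilon,y_0^\varepsilon)$; it depends continuously on $\varepsilon$ and tends to $(x_0^*,y_0^* )$ as $\varepsilon\to0$. (ii) If $\sum_{k=0}^{q-1}f(x_k^* )\neq 0$, then there exist $\varepsilon_0>0$ and a neighborhood $U$ of $(x_0^*,y_0^* )$ such that for $0<|\varepsilon|<\varepsilon_0$ no point of $U$ satisfies 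$T_\varepsilon^q(p)=p$.
   Context: A $d$-IEM on $\mathbb{S}^1=\mathbb{R}/\mathbb{Z}$ (identified with $[0,1)$) translates each of $d$ consecutive left-closed right-open elemental subintervals $J_\alpha$; here $F_y(x)=x+\omega_\alpha(y)$ for $x\in J_\alpha(y)$, with the endpoints of the $J_\alpha(y)$ and $\omega_\alpha(y)$ of class $C^1$ in $y\in P$, $P$ an open interval. *)

theory Defs
  imports "HOL-Analysis.Analysis"
begin

text \<open>Circle S^1 = R/Z represented by [0,1).  A d-IEM is given by endpoint functions
  a 0 y < a 1 y < ... < a (d-1) y < a 0 y + 1 (a lift of the cyclically ordered
  endpoints) and translation amounts om alpha y.\<close>

definition upper_end :: "(nat \<Rightarrow> real \<Rightarrow> real) \<Rightarrow> nat \<Rightarrow> nat \<Rightarrow> real \<Rightarrow> real" where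
  "upper_end a d \<alpha> y = (if Suc \<alpha> = d then a 0 y + 1 else a (Suc \<alpha>) y)"

definition elem_J :: "(nat \<Rightarrow> real \<Rightarrow> real) \<Rightarrow> nat \<Rightarrow> nat \<Rightarrow> real \<Rightarrow> real set" where
  "elem_J a d \<alpha> y = {x \<in> {0..<1}. \<exists>n::int. a \<alpha> y \<le> x + of_int n \<and> x + of_int n < upper_end a d \<alpha> y}"

definition elem_J_int :: "(nat \<Rightarrow> real \<Rightarrow> real) \<Rightarrow> nat \<Rightarrow> nat \<Rightarrow> real \<Rightarrow> real set" where
  "elem_J_int a d \<alpha> y = {x \<in> {0..<1}. \<exists>n::int. a \<alpha> y < x + of_int n \<and> x + of_int n < upper_end a d \<alpha> y}"

definition elem_idx :: "(nat \<Rightarrow> real \<Rightarrow> real) \<Rightarrow> nat \<Rightarrow> real \<Rightarrow> real \<Rightarrow> nat" where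
  "elem_idx a d y x = (THE \<alpha>. \<alpha> < d \<and> x \<in> elem_J a d \<alpha> y)"

definition IEM :: "(nat \<Rightarrow> real \<Rightarrow> real) \<Rightarrow> (nat \<Rightarrow> real \<Rightarrow> real) \<Rightarrow> nat \<Rightarrow> real \<Rightarrow> real \<Rightarrow> real" where
  "IEM a om d y x = frac (x + om (elem_idx a d y x) y)"

definition Tmap :: "(nat \<Rightarrow> real \<Rightarrow> real) \<Rightarrow> (nat \<Rightarrow> real \<Rightarrow> real) \<Rightarrow> nat \<Rightarrow> (real \<Rightarrow> real)
    \<Rightarrow> real \<Rightarrow> real \<times> real \<Rightarrow> real \<times> real" where
  "Tmap a om d f \<epsilon> p = (IEM a om d (snd p) (fst p),
                         snd p + \<epsilon> * f (IEM a om d (snd p) (fst p)))"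

definition IEM_family :: "(nat \<Rightarrow> real \<Rightarrow> real) \<Rightarrow> (nat \<Rightarrow> real \<Rightarrow> real) \<Rightarrow> nat \<Rightarrow> real set \<Rightarrow> bool" where
  "IEM_family a om d P \<longleftrightarrow>
     d \<ge> 1 \<and>
     (\<forall>\<alpha><d. a \<alpha> C1_differentiable_on P \<and> om \<alpha> C1_differentiable_on P) \<and>
     (\<forall>y\<in>P. (\<forall>\<alpha>. Suc \<alpha> < d \<longrightarrow> a \<alpha> y < a (Suc \<alpha>) y) \<and> a (d - 1) y < a 0 y + 1 \<and>
             bij_betw (IEM a om d y) {0..<1} {0..<1})"

definition smooth_fun :: "(real \<Rightarrow> real) \<Rightarrow> bool" where
  "smooth_fun f \<longleftrightarrow> (\<forall>k x. ((deriv ^^ k) f) differentiable (at x))"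

definition cyl_nbhd :: "real set \<Rightarrow> real \<times> real \<Rightarrow> (real \<times> real) set \<Rightarrow> bool" where
  "cyl_nbhd P p U \<longleftrightarrow> U \<subseteq> {0..<1} \<times> P \<and>
     (\<exists>V. open V \<and> p \<in> V \<and> (\<lambda>(x, y). (frac x, y)) ` V \<subseteq> U)"

end

theory Submission
  imports Defs "HOL-Analysis.Analysis"
begin

definition C1W :: "(real\<times>real\<times>real) set \<Rightarrow> (real\<times>real\<times>real \<Rightarrow> real) \<Rightarrow> bool" where
 "C1W W g \<longleftrightarrow> (\<exists>D. continuous_on W D \<and> (\<forall>v\<in>W. (g has_derivative (\<lambda>h. D v \<bullet> h)) (at v)))"

lemma C1W_const: "C1W W (\<lambda>v. c)"
  unfolding C1W_def
  by (rule exI[of _ "\<lambda>v. 0"]) (auto intro!: has_derivative_eq_rhs[OF has_derivative_const] simp: fun_eq_iff)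

lemma C1W_fst: "C1W W fst"
  unfolding C1W_def
  by (rule exI[of _ "\<lambda>v. (1,0,0)"]) (auto intro!: derivative_eq_intros)

lemma C1W_snd1: "C1W W (\<lambda>v. fst (snd v))"
  unfolding C1W_def
  by (rule exI[of _ "\<lambda>v. (0,1,0)"]) (auto intro!: derivative_eq_intros)

lemma C1W_snd2: "C1W W (\<lambda>v. snd (snd v))"
  unfolding C1W_def
  by (rule exI[of _ "\<lambda>v. (0,0,1)"]) (auto intro!: derivative_eq_intros)

lemma C1W_cont: "C1W W g \<Longrightarrow> continuous_on W g"
  unfolding C1W_def
  by (metis continuous_at_imp_continuous_on has_derivative_continuous)

lemma C1W_add: "C1W W g1 \<Longrightarrow> C1W W g2 \<Longrightarrow> C1W W (\<lambda>v. g1 v + g2 v)"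
  unfolding C1W_def
proof (elim exE conjE)
  fix D1 D2 assume "continuous_on W D1" "\<forall>v\<in>W. (g1 has_derivative (\<lambda>h. D1 v \<bullet> h)) (at v)"
    "continuous_on W D2" "\<forall>v\<in>W. (g2 has_derivative (\<lambda>h. D2 v \<bullet> h)) (at v)"
  then show "\<exists>D. continuous_on W D \<and> (\<forall>v\<in>W. ((\<lambda>v. g1 v + g2 v) has_derivative (\<lambda>h. D v \<bullet> h)) (at v))"
    by (intro exI[of _ "\<lambda>v. D1 v + D2 v"]) (auto intro!: continuous_intros derivative_eq_intros simp: inner_add_left)
qed

lemma C1W_mult: "C1W W g1 \<Longrightarrow> C1W W g2 \<Longrightarrow> C1W W (\<lambda>v. g1 v * g2 v)"
proof -
  assume a1: "C1W W g1" and a2: "C1W W g2"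
  have c1: "continuous_on W g1" and c2: "continuous_on W g2" using a1 a2 C1W_cont by auto
  from a1 a2 obtain D1 D2 where "continuous_on W D1" "\<forall>v\<in>W. (g1 has_derivative (\<lambda>h. D1 v \<bullet> h)) (at v)"
    "continuous_on W D2" "\<forall>v\<in>W. (g2 has_derivative (\<lambda>h. D2 v \<bullet> h)) (at v)"
    unfolding C1W_def by blast
  then show ?thesis unfolding C1W_def using c1 c2
    by (intro exI[of _ "\<lambda>v. g1 v *\<^sub>R D2 v + g2 v *\<^sub>R D1 v"])
       (auto intro!: continuous_intros derivative_eq_intros simp: inner_add_left algebra_simps)
qed

lemma C1W_compose:
  assumes "C1W W g" and "\<And>t. t \<in> S \<Longrightarrow> (\<phi> has_real_derivative \<phi>' t) (at t)"
    and "continuous_on S \<phi>'" and "g ` W \<subseteq> S"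
  shows "C1W W (\<lambda>v. \<phi> (g v))"
proof -
  have c: "continuous_on W g" using assms(1) C1W_cont by auto
  from assms(1) obtain D where D: "continuous_on W D" "\<forall>v\<in>W. (g has_derivative (\<lambda>h. D v \<bullet> h)) (at v)"
    unfolding C1W_def by blast
  have "continuous_on W (\<lambda>v. \<phi>' (g v))"
    using continuous_on_compose2[OF assms(3) c assms(4)] .
  then have cc: "continuous_on W (\<lambda>v. \<phi>' (g v) *\<^sub>R D v)" using D(1) by (intro continuous_intros)
  have der: "((\<lambda>v. \<phi> (g v)) has_derivative (\<lambda>h. (\<phi>' (g v) *\<^sub>R D v) \<bullet> h)) (at v)" if "v \<in> W" for v
  proof -
    have "(\<phi> has_derivative (*) (\<phi>' (g v))) (at (g v))"
      using assms(2)[of "g v"] that assms(4) by (auto simp: has_field_derivative_def)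
    from diff_chain_at[OF D(2)[rule_format, OF that] this]
    have "((\<lambda>v. \<phi> (g v)) has_derivative (\<lambda>h. \<phi>' (g v) * (D v \<bullet> h))) (at v)"
      by (simp add: o_def)
    then show ?thesis by (rule has_derivative_eq_rhs) (simp add: fun_eq_iff)
  qed
  show ?thesis unfolding C1W_def using cc der by blast
qed

lemma C1W_sum: "(\<And>k. k < (n::nat) \<Longrightarrow> C1W W (g k)) \<Longrightarrow> C1W W (\<lambda>v. \<Sum>k<n. g k v)"
  by (induction n) (auto intro: C1W_add C1W_const)

lemma C1W_diff: "C1W W g1 \<Longrightarrow> C1W W g2 \<Longrightarrow> C1W W (\<lambda>v. g1 v - g2 v)"
proof -
  assume "C1W W g1" "C1W W g2"
  then have "C1W W (\<lambda>v. g1 v + (-1) * g2 v)" by (intro C1W_add C1W_mult C1W_const)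
  then show ?thesis by simp
qed


primrec OB :: "(nat \<Rightarrow> real \<Rightarrow> real) \<Rightarrow> (real \<Rightarrow> real) \<Rightarrow> nat \<Rightarrow> real\<times>real\<times>real \<Rightarrow> real\<times>real" where
  "OB w f 0 v = (fst v, fst (snd v))"
| "OB w f (Suc n) v = (fst (OB w f n v) + w n (snd (OB w f n v)),
      snd (OB w f n v) + snd (snd v) * f (fst (OB w f n v) + w n (snd (OB w f n v))))"

lemma OB_eps0: "OB w f n (x, y, 0) = (x + (\<Sum>j<n. w j y), y)"
  by (induction n) auto

lemma OB_snd: "snd (OB w f n v) = fst (snd v) + snd (snd v) * (\<Sum>k<n. f (fst (OB w f (Suc k) v)))"
  by (induction n) (auto simp: algebra_simps)

lemma OB_snd_bound:
  assumes "\<And>t. \<bar>f t\<bar> \<le> B"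
  shows "\<bar>snd (OB w f n v) - fst (snd v)\<bar> \<le> \<bar>snd (snd v)\<bar> * (real n * B)"
proof -
  have "\<bar>\<Sum>k<n. f (fst (OB w f (Suc k) v))\<bar> \<le> (\<Sum>k<n. \<bar>f (fst (OB w f (Suc k) v))\<bar>)"
    by (rule sum_abs)
  also have "\<dots> \<le> (\<Sum>k<n. B)" by (intro sum_mono assms)
  finally have "\<bar>\<Sum>k<n. f (fst (OB w f (Suc k) v))\<bar> \<le> real n * B" by simp
  moreover have "snd (OB w f n v) - fst (snd v) = snd (snd v) * (\<Sum>k<n. f (fst (OB w f (Suc k) v)))"
    using OB_snd[of w f n v] by linarith
  ultimately show ?thesis
    by (simp add: abs_mult mult_left_mono)
qed

lemma OB_C1:
  assumes S: "\<And>v k. v \<in> W \<Longrightarrow> k < n \<Longrightarrow> snd (OB w f k v) \<in> S"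
    and wd: "\<And>j t. j < n \<Longrightarrow> t \<in> S \<Longrightarrow> (w j has_real_derivative w' j t) (at t)"
    and wc: "\<And>j. j < n \<Longrightarrow> continuous_on S (w' j)"
    and fd: "\<And>t. (f has_real_derivative f' t) (at t)"
    and fc: "continuous_on UNIV f'"
  shows "C1W W (\<lambda>v. fst (OB w f n v)) \<and> C1W W (\<lambda>v. snd (OB w f n v))"
  using S wd wc
proof (induction n)
  case 0
  then show ?case by (simp add: C1W_fst C1W_snd1)
next
  case (Suc n)
  then have IH: "C1W W (\<lambda>v. fst (OB w f n v))" "C1W W (\<lambda>v. snd (OB w f n v))" by auto
  have w1: "C1W W (\<lambda>v. w n (snd (OB w f n v)))"
    by (rule C1W_compose[OF IH(2), of S "w n" "w' n"]) (use Suc.prems in auto)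
  have x1: "C1W W (\<lambda>v. fst (OB w f n v) + w n (snd (OB w f n v)))"
    by (rule C1W_add[OF IH(1) w1])
  have f1: "C1W W (\<lambda>v. f (fst (OB w f n v) + w n (snd (OB w f n v))))"
    by (rule C1W_compose[OF x1, of UNIV f f']) (use fd fc in auto)
  show ?case
    using x1 C1W_add[OF IH(2) C1W_mult[OF C1W_snd2 f1]] by simp
qed

lemma fam_mono:
  assumes fam: "IEM_family a om d P" and y: "y \<in> P" and ab: "\<alpha> \<le> \<beta>" "\<beta> < d"
  shows "a \<alpha> y \<le> a \<beta> y"
  using ab
proof (induction \<beta>)
  case 0 then show ?case by simp
next
  case (Suc \<beta>)
  show ?case
  proof (cases "\<alpha> = Suc \<beta>")
    case True then show ?thesis by simp
  next
    case False
    then have "\<alpha> \<le> \<beta>" using Suc.prems by simp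
    moreover have "a \<beta> y < a (Suc \<beta>) y" using fam y Suc.prems unfolding IEM_family_def by blast
    ultimately show ?thesis using Suc.IH Suc.prems by fastforce
  qed
qed

lemma fam_range:
  assumes fam: "IEM_family a om d P" and y: "y \<in> P" and al: "\<alpha> < d"
  shows "a 0 y \<le> a \<alpha> y" "upper_end a d \<alpha> y \<le> a 0 y + 1" "a \<alpha> y < upper_end a d \<alpha> y"
proof -
  show "a 0 y \<le> a \<alpha> y" using fam_mono[OF fam y, of 0 \<alpha>] al by simp
  have last: "a (d - 1) y < a 0 y + 1" using fam y unfolding IEM_family_def by blast
  show "upper_end a d \<alpha> y \<le> a 0 y + 1"
  proof (cases "Suc \<alpha> = d")
    case True then show ?thesis by (simp add: upper_end_def)
  next
    case False
    then have "Suc \<alpha> \<le> d - 1" "d - 1 < d" using al by auto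
    then have "a (Suc \<alpha>) y \<le> a (d - 1) y" using fam_mono[OF fam y] by blast
    then show ?thesis using False last by (simp add: upper_end_def)
  qed
  show "a \<alpha> y < upper_end a d \<alpha> y"
  proof (cases "Suc \<alpha> = d")
    case True
    then have "a \<alpha> y = a (d - 1) y" by auto
    then show ?thesis using True last by (simp add: upper_end_def)
  next
    case False
    then have "Suc \<alpha> < d" using al by auto
    then show ?thesis using False fam y unfolding IEM_family_def upper_end_def by auto
  qed
qed

lemma fam_upper_le:
  assumes fam: "IEM_family a om d P" and y: "y \<in> P" and ab: "\<alpha> < \<beta>" "\<beta> < d"
  shows "upper_end a d \<alpha> y \<le> a \<beta> y"
proof -
  have "Suc \<alpha> \<noteq> d" "Suc \<alpha> \<le> \<beta>" using ab by auto
  then show ?thesis using fam_mono[OF fam y, of "Suc \<alpha>" \<beta>] ab by (simp add: upper_end_def)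
qed

lemma elem_unique:
  assumes fam: "IEM_family a om d P" and y: "y \<in> P" and ab: "\<alpha> < d" "\<beta> < d"
    and xa: "x \<in> elem_J a d \<alpha> y" and xb: "x \<in> elem_J a d \<beta> y"
  shows "\<alpha> = \<beta>"
proof -
  from xa obtain n :: int where n: "a \<alpha> y \<le> x + n" "x + n < upper_end a d \<alpha> y"
    unfolding elem_J_def by auto
  from xb obtain m :: int where m: "a \<beta> y \<le> x + m" "x + m < upper_end a d \<beta> y"
    unfolding elem_J_def by auto
  note ra = fam_range[OF fam y ab(1)] and rb = fam_range[OF fam y ab(2)]
  have "real_of_int n - m < 1" "real_of_int m - n < 1" using n m ra rb by linarith+
  then have nm: "n = m" by linarith
  show ?thesis
  proof (rule ccontr)
    assume "\<alpha> \<noteq> \<beta>"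
    then consider "\<alpha> < \<beta>" | "\<beta> < \<alpha>" by linarith
    then show False
    proof cases
      case 1 then show False using fam_upper_le[OF fam y 1 ab(2)] n m nm by linarith
    next
      case 2 then show False using fam_upper_le[OF fam y 2 ab(1)] n m nm by linarith
    qed
  qed
qed

lemma elem_exists:
  assumes fam: "IEM_family a om d P" and y: "y \<in> P" and x: "x \<in> {0..<1}"
  shows "\<exists>\<alpha><d. x \<in> elem_J a d \<alpha> y"
proof -
  define n where "n = \<lceil>a 0 y - x\<rceil>"
  define z where "z = x + of_int n"
  have z1: "a 0 y \<le> z" "z < a 0 y + 1" unfolding z_def n_def by linarith+
  have d1: "d \<ge> 1" using fam unfolding IEM_family_def by blast
  define A where "A = {\<alpha>. \<alpha> < d \<and> a \<alpha> y \<le> z}"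
  have finA: "finite A" unfolding A_def by auto
  have A0: "0 \<in> A" unfolding A_def using d1 z1 by auto
  define \<alpha> where "\<alpha> = Max A"
  have \<alpha>A: "\<alpha> \<in> A" unfolding \<alpha>_def using finA A0 Max_in by blast
  then have al: "\<alpha> < d" "a \<alpha> y \<le> z" unfolding A_def by auto
  have "z < upper_end a d \<alpha> y"
  proof (cases "Suc \<alpha> = d")
    case True then show ?thesis using z1 by (simp add: upper_end_def)
  next
    case False
    then have "Suc \<alpha> < d" using al by auto
    moreover have "Suc \<alpha> \<notin> A" using Max_ge[OF finA, of "Suc \<alpha>"] unfolding \<alpha>_def by auto
    ultimately show ?thesis unfolding A_def upper_end_def using False by auto
  qed
  then have "x \<in> elem_J a d \<alpha> y" unfolding elem_J_def using x al(2) z_def by auto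
  then show ?thesis using al by blast
qed

lemma elem_idx_eq:
  assumes fam: "IEM_family a om d P" and y: "y \<in> P" and al: "\<alpha> < d" "x \<in> elem_J a d \<alpha> y"
  shows "elem_idx a d y x = \<alpha>"
  unfolding elem_idx_def
  by (rule the_equality) (use al elem_unique[OF fam y] in blast)+

lemma elem_idx_lt:
  assumes fam: "IEM_family a om d P" and y: "y \<in> P" and x: "x \<in> {0..<1}"
  shows "elem_idx a d y x < d \<and> x \<in> elem_J a d (elem_idx a d y x) y"
  using elem_exists[OF fam y x] elem_idx_eq[OF fam y] by metis


lemma isCont_fam:
  assumes fam: "IEM_family a om d P" and P: "open P" and y: "y \<in> P" and al: "\<alpha> < d"
  shows "isCont (a \<alpha>) y" "isCont (om \<alpha>) y" "isCont (upper_end a d \<alpha>) y"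
proof -
  have c: "continuous_on P (a \<beta>)" "continuous_on P (om \<beta>)" if "\<beta> < d" for \<beta>
    using fam that unfolding IEM_family_def by (auto intro: C1_differentiable_imp_continuous_on)
  show "isCont (a \<alpha>) y" "isCont (om \<alpha>) y" using c[OF al] P y continuous_on_eq_continuous_at by blast+
  have d1: "0 < d" using al by simp
  show "isCont (upper_end a d \<alpha>) y"
  proof (cases "Suc \<alpha> = d")
    case True
    then have "upper_end a d \<alpha> = (\<lambda>y. a 0 y + 1)" by (simp add: upper_end_def fun_eq_iff)
    moreover have "isCont (a 0) y" using c[OF d1] P y continuous_on_eq_continuous_at by blast
    ultimately show ?thesis by simp
  next
    case False
    then have "upper_end a d \<alpha> = a (Suc \<alpha>)" "Suc \<alpha> < d" using al by (auto simp add: upper_end_def fun_eq_iff)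
    then show ?thesis using c P y continuous_on_eq_continuous_at by metis
  qed
qed

lemma LOCk:
  assumes fam: "IEM_family a om d P" and P: "open P" and y0: "y0 \<in> P"
    and xs: "xs \<in> {0..<1}" and int: "xs \<in> elem_J_int a d (elem_idx a d y0 xs) y0"
    and Xk: "frac Xk = xs"
  shows "\<exists>\<delta>>0. \<forall>x y. \<bar>x - Xk\<bar> < \<delta> \<and> \<bar>y - y0\<bar> < \<delta> \<longrightarrow>
            y \<in> P \<and> IEM a om d y (frac x) = frac (x + om (elem_idx a d y0 xs) y)"
proof -
  define \<alpha> where "\<alpha> = elem_idx a d y0 xs"
  have al: "\<alpha> < d" unfolding \<alpha>_def using elem_idx_lt[OF fam y0 xs] by blast
  from int obtain n :: int where n: "a \<alpha> y0 < xs + n" "xs + n < upper_end a d \<alpha> y0"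
    unfolding elem_J_int_def \<alpha>_def by auto
  define \<eta> where "\<eta> = min (xs + n - a \<alpha> y0) (upper_end a d \<alpha> y0 - xs - n) / 2"
  have \<eta>: "\<eta> > 0" unfolding \<eta>_def using n by simp
  obtain d1 where d1: "d1 > 0" "\<And>y. dist y y0 < d1 \<Longrightarrow> dist (a \<alpha> y) (a \<alpha> y0) < \<eta>"
    using isCont_fam(1)[OF fam P y0 al] \<eta> unfolding continuous_at_eps_delta by blast
  obtain d2 where d2: "d2 > 0" "\<And>y. dist y y0 < d2 \<Longrightarrow> dist (upper_end a d \<alpha> y) (upper_end a d \<alpha> y0) < \<eta>"
    using isCont_fam(3)[OF fam P y0 al] \<eta> unfolding continuous_at_eps_delta by blast
  obtain d3 where d3: "d3 > 0" "ball y0 d3 \<subseteq> P" using P y0 open_contains_ball by blast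
  define \<delta> where "\<delta> = min (min d1 d2) (min d3 \<eta>)"
  have "\<delta> > 0" unfolding \<delta>_def using d1 d2 d3 \<eta> by simp
  moreover have "y \<in> P \<and> IEM a om d y (frac x) = frac (x + om \<alpha> y)"
    if xy: "\<bar>x - Xk\<bar> < \<delta>" "\<bar>y - y0\<bar> < \<delta>" for x y
  proof -
    have yP: "y \<in> P" using d3 xy unfolding \<delta>_def by (auto simp: dist_real_def)
    have ay: "\<bar>a \<alpha> y - a \<alpha> y0\<bar> < \<eta>" using d1(2)[of y] xy unfolding \<delta>_def by (auto simp: dist_real_def)
    have uy: "\<bar>upper_end a d \<alpha> y - upper_end a d \<alpha> y0\<bar> < \<eta>"
      using d2(2)[of y] xy unfolding \<delta>_def by (auto simp: dist_real_def)
    have Xkf: "Xk = xs + of_int \<lfloor>Xk\<rfloor>" using Xk by (simp add: frac_def)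
    define N where "N = \<lfloor>x\<rfloor> - \<lfloor>Xk\<rfloor> + n"
    have eqN: "frac x + of_int N = x - Xk + xs + n" unfolding N_def frac_def using Xkf by simp
    have "\<bar>(x - Xk + xs + n) - (xs + n)\<bar> < \<eta>" using xy unfolding \<delta>_def by auto
    moreover have "\<eta> \<le> (xs + n - a \<alpha> y0) / 2" "\<eta> \<le> (upper_end a d \<alpha> y0 - xs - n) / 2"
      unfolding \<eta>_def by auto
    ultimately have "a \<alpha> y < frac x + of_int N" "frac x + of_int N < upper_end a d \<alpha> y"
      using ay uy eqN by (auto simp: abs_less_iff)
    then have "frac x \<in> elem_J a d \<alpha> y" unfolding elem_J_def
      by (auto simp: frac_lt_1 intro!: exI[of _ N])
    then have "elem_idx a d y (frac x) = \<alpha>" using elem_idx_eq[OF fam yP al] by blast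
    then show ?thesis using yP unfolding IEM_def by (simp add: frac_add_simps)
  qed
  ultimately show ?thesis unfolding \<alpha>_def by blast
qed

lemma dist3_le: "dist (x::real, y::real, e::real) (x0, y0, e0) \<le> \<bar>x - x0\<bar> + \<bar>y - y0\<bar> + \<bar>e - e0\<bar>"
proof -
  have "dist (x, y, e) (x0, y0, e0) = norm (x - x0, y - y0, e - e0)" by (simp add: dist_norm)
  also have "\<dots> \<le> norm (x - x0) + norm (y - y0, e - e0)" by (rule norm_Pair_le)
  also have "norm (y - y0, e - e0) \<le> norm (y - y0) + norm (e - e0)" by (rule norm_Pair_le)
  finally show ?thesis by simp
qed

lemma ex_delta_all:
  assumes "\<And>k. k < (n::nat) \<Longrightarrow> \<exists>\<delta>>0. Q k \<delta>"
    and "\<And>k \<delta> \<delta>'. Q k \<delta> \<Longrightarrow> 0 < \<delta>' \<Longrightarrow> \<delta>' \<le> \<delta> \<Longrightarrow> Q k \<delta>'"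
  shows "\<exists>\<delta>>(0::real). \<forall>k<n. Q k \<delta>"
  using assms(1)
proof (induction n)
  case 0 then show ?case by (auto intro: exI[of _ 1])
next
  case (Suc n)
  then obtain \<delta>1 where d1: "\<delta>1 > 0" "\<forall>k<n. Q k \<delta>1" by auto
  obtain \<delta>2 where d2: "\<delta>2 > 0" "Q n \<delta>2" using Suc.prems by blast
  have "\<forall>k<Suc n. Q k (min \<delta>1 \<delta>2)"
    using d1 d2 assms(2) by (auto simp: less_Suc_eq)
  then show ?case using d1 d2 by (intro exI[of _ "min \<delta>1 \<delta>2"]) auto
qed

lemma per_int: assumes "\<forall>x. f (x + 1) = (f x::real)" shows "f (x + of_int n) = f x"
proof (induction n arbitrary: x rule: int_induct[where k=0])
  case base then show ?case by simp
next
  case (step1 i) then show ?case using assms by (metis add.assoc of_int_add of_int_1)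
next
  case (step2 i)
  have "f (x + of_int (i - 1)) = f (x + of_int (i - 1) + 1)" using assms[rule_format, of "x + of_int (i - 1)"] by simp
  also have "\<dots> = f (x + of_int i)" by (simp add: algebra_simps)
  finally show ?case using step2 by simp
qed

lemma per_frac: assumes "\<forall>x. f (x + 1) = (f x::real)" shows "f (frac x) = f x"
  using per_int[OF assms, of "frac x" "\<lfloor>x\<rfloor>"] by (simp add: frac_def)

lemma per_deriv:
  assumes "\<forall>x. f (x + 1) = (f x::real)" and "f differentiable (at (x + of_int n))"
  shows "deriv f (x + of_int n) = deriv f x"
proof -
  have "(f has_field_derivative deriv f (x + of_int n)) (at (x + of_int n))"
    using assms(2) DERIV_deriv_iff_real_differentiable by blast
  then have "((\<lambda>t. f (t + of_int n)) has_field_derivative deriv f (x + of_int n)) (at x)"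
    using DERIV_shift by blast
  moreover have "(\<lambda>t. f (t + of_int n)) = f" using per_int[OF assms(1)] by auto
  ultimately show ?thesis using DERIV_imp_deriv by metis
qed

locale setting =
  fixes a om :: "nat \<Rightarrow> real \<Rightarrow> real" and d q :: nat and P :: "real set"
    and f :: "real \<Rightarrow> real" and x0 y0 :: real
  assumes P: "open P"
    and fam: "IEM_family a om d P"
    and f_smooth: "smooth_fun f"
    and f_per: "\<forall>x. f (x + 1) = f x"
    and q: "q \<ge> 1"
    and y0: "y0 \<in> P"
    and x0: "x0 \<in> {0..<1}"
    and per: "((Tmap a om d f 0) ^^ q) (x0, y0) = (x0, y0)"
    and int: "\<forall>k<q. (IEM a om d y0 ^^ k) x0
                \<in> elem_J_int a d (elem_idx a d y0 ((IEM a om d y0 ^^ k) x0)) y0"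
begin

definition "xs k = (IEM a om d y0 ^^ k) x0"
definition "al k = elem_idx a d y0 (xs k)"
definition "w k = om (al k)"
definition "X k = x0 + (\<Sum>j<k. w j y0)"
definition "m = \<lfloor>X q\<rfloor>"
definition "G1 v = (\<Sum>k<q. f (fst (OB w f (Suc k) v)))"
definition "G2 v = fst (OB w f q v) - fst v - of_int m"
definition "v0 = (x0, y0, 0::real)"

lemma xs_range: "xs k \<in> {0..<1}"
  by (cases k) (use x0 in \<open>auto simp: xs_def IEM_def frac_lt_1\<close>)

lemma xs_Suc: "xs (Suc k) = frac (xs k + w k y0)"
  by (simp add: xs_def w_def al_def IEM_def)

lemma frac_X: "frac (X k) = xs k"
proof (induction k)
  case 0 then show ?case using x0 by (simp add: X_def xs_def)
next
  case (Suc k)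
  have "X (Suc k) = X k + w k y0" by (simp add: X_def)
  then have "frac (X (Suc k)) = frac (frac (X k) + w k y0)" by simp
  then show ?case using Suc xs_Suc by simp
qed

lemma Tmap0_iter: "(Tmap a om d f 0 ^^ k) (x0, y0) = (xs k, y0)"
  by (induction k) (auto simp: Tmap_def xs_def)

lemma xs_q: "xs q = x0"
  using per Tmap0_iter[of q] by simp

lemma X_q: "X q = x0 + of_int m"
proof -
  have "frac (X q) = x0" using frac_X xs_q by simp
  then show ?thesis unfolding m_def frac_def by simp
qed

lemma X_int: "X k = xs k + of_int \<lfloor>X k\<rfloor>"
  using frac_X[of k] by (simp add: frac_def)

lemma al_lt: "al k < d"
  using elem_idx_lt[OF fam y0 xs_range] by (simp add: al_def)

lemma f_diff: "f differentiable (at t)"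
  using f_smooth unfolding smooth_fun_def by (metis funpow_0)

lemma f'_diff: "deriv f differentiable (at t)"
proof -
  have "((deriv ^^ Suc 0) f) differentiable (at t)" using f_smooth unfolding smooth_fun_def by blast
  then show ?thesis by simp
qed

lemma f_der: "(f has_real_derivative deriv f t) (at t)"
  using f_diff DERIV_deriv_iff_real_differentiable by blast

lemma f'_cont: "continuous_on UNIV (deriv f)"
  using f'_diff by (simp add: continuous_at_imp_continuous_on differentiable_imp_continuous_within)

lemma f_cont: "continuous_on UNIV f"
  using f_diff by (simp add: continuous_at_imp_continuous_on differentiable_imp_continuous_within)

lemma f_bound: "\<exists>B\<ge>0. \<forall>t. \<bar>f t\<bar> \<le> B"
proof -
  have "compact (f ` {0..1})" using f_cont by (intro compact_continuous_image) (auto intro: continuous_on_subset)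
  then obtain B where B: "\<forall>z\<in>f ` {0..1}. norm z \<le> B" using compact_imp_bounded bounded_iff by metis
  have "\<bar>f t\<bar> \<le> B" for t
  proof -
    have "frac t \<in> {0..1}" by (simp add: frac_lt_1 less_imp_le)
    then have "\<bar>f (frac t)\<bar> \<le> B" using B by auto
    then show ?thesis using per_frac[OF f_per] by simp
  qed
  moreover have "B \<ge> 0" using B by force
  ultimately show ?thesis by blast
qed

lemma w_C1: "w k C1_differentiable_on P"
  using fam al_lt unfolding IEM_family_def w_def by blast

lemma w_der: "t \<in> P \<Longrightarrow> (w k has_real_derivative vector_derivative (w k) (at t)) (at t)"
  using w_C1 unfolding C1_differentiable_on_eq
  by (simp add: has_real_derivative_iff_has_vector_derivative vector_derivative_works)

lemma w'_cont: "continuous_on P (\<lambda>t. vector_derivative (w k) (at t))"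
  using w_C1 unfolding C1_differentiable_on_eq by blast

lemma LOC: "\<exists>\<delta>>0. \<forall>k<q. \<forall>x y. \<bar>x - X k\<bar> < \<delta> \<and> \<bar>y - y0\<bar> < \<delta> \<longrightarrow>
            y \<in> P \<and> IEM a om d y (frac x) = frac (x + w k y)"
proof (rule ex_delta_all)
  fix k assume k: "k < q"
  show "\<exists>\<delta>>0. \<forall>x y. \<bar>x - X k\<bar> < \<delta> \<and> \<bar>y - y0\<bar> < \<delta> \<longrightarrow>
            y \<in> P \<and> IEM a om d y (frac x) = frac (x + w k y)"
    using LOCk[OF fam P y0 xs_range, of k "X k"] int k frac_X
    unfolding w_def al_def xs_def by auto
qed (meson order_less_le_trans)

end

context setting begin

lemma OB_v0: "OB w f k v0 = (X k, y0)"
  by (simp add: v0_def OB_eps0 X_def)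

lemma COMP:
  assumes \<delta>: "\<forall>k<q. \<forall>x y. \<bar>x - X k\<bar> < \<delta> \<and> \<bar>y - y0\<bar> < \<delta> \<longrightarrow>
            y \<in> P \<and> IEM a om d y (frac x) = frac (x + w k y)"
    and "n \<le> q" and "\<forall>k<n. \<bar>fst (OB w f k v) - X k\<bar> < \<delta> \<and> \<bar>snd (OB w f k v) - y0\<bar> < \<delta>"
  shows "(Tmap a om d f (snd (snd v)) ^^ n) (frac (fst v), fst (snd v))
           = (frac (fst (OB w f n v)), snd (OB w f n v))"
  using assms(2,3)
proof (induction n)
  case 0 then show ?case by simp
next
  case (Suc n)
  define x' where "x' = fst (OB w f n v)"
  define y' where "y' = snd (OB w f n v)"
  have IH: "(Tmap a om d f (snd (snd v)) ^^ n) (frac (fst v), fst (snd v)) = (frac x', y')"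
    using Suc by (simp add: x'_def y'_def)
  have "IEM a om d y' (frac x') = frac (x' + w n y')"
    using \<delta> Suc.prems unfolding x'_def y'_def by auto
  then have "Tmap a om d f (snd (snd v)) (frac x', y') = (frac (x' + w n y'), y' + snd (snd v) * f (x' + w n y'))"
    unfolding Tmap_def using per_frac[OF f_per] by simp
  then show ?case using IH by (simp add: x'_def y'_def)
qed

lemma C1_all: "\<exists>W. open W \<and> v0 \<in> W \<and> (\<forall>v\<in>W. \<forall>k\<le>q. snd (OB w f k v) \<in> P) \<and> C1W W G1 \<and> C1W W G2 \<and>
   (\<forall>k\<le>q. C1W W (\<lambda>v. fst (OB w f k v)) \<and> C1W W (\<lambda>v. snd (OB w f k v)))"
proof -
  obtain B where B: "B \<ge> 0" "\<And>t. \<bar>f t\<bar> \<le> B" using f_bound by blast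
  obtain \<rho> where \<rho>: "\<rho> > 0" "ball y0 \<rho> \<subseteq> P" using P y0 open_contains_ball by blast
  define r1 where "r1 = \<rho> / (1 + real q * B)"
  have pos: "1 + real q * B > 0" using B by (simp add: add_pos_nonneg)
  have r1: "r1 > 0" "r1 * (1 + real q * B) = \<rho>" unfolding r1_def using \<rho> pos by auto
  define W where "W = ball x0 r1 \<times> ball y0 r1 \<times> ball (0::real) r1"
  have oW: "open W" unfolding W_def by (intro open_Times open_ball)
  have v0W: "v0 \<in> W" unfolding W_def v0_def using r1 by auto
  have SP: "snd (OB w f k v) \<in> P" if v: "v \<in> W" and k: "k \<le> q" for v k
  proof -
    have e: "\<bar>snd (snd v)\<bar> < r1" and y: "\<bar>fst (snd v) - y0\<bar> < r1"
      using v unfolding W_def by (auto simp: dist_real_def abs_minus_commute)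
    have "\<bar>snd (OB w f k v) - fst (snd v)\<bar> \<le> \<bar>snd (snd v)\<bar> * (real k * B)"
      by (rule OB_snd_bound) (use B in auto)
    also have "\<dots> \<le> r1 * (real q * B)"
      using e k B by (intro mult_mono) (auto intro: mult_right_mono)
    finally have "\<bar>snd (OB w f k v) - y0\<bar> < \<rho>" using y r1 by (simp add: algebra_simps)
    then show ?thesis using \<rho> by (auto simp: dist_real_def abs_minus_commute)
  qed
  have OBC: "C1W W (\<lambda>v. fst (OB w f k v)) \<and> C1W W (\<lambda>v. snd (OB w f k v))" if k: "k \<le> q" for k
    apply (rule OB_C1[where S=P and w'="\<lambda>j t. vector_derivative (w j) (at t)" and f'="deriv f"])
    subgoal for v k' using SP[of v k'] k by simp
    subgoal for j t by (rule w_der)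
    subgoal for j by (rule w'_cont)
    subgoal for t by (rule f_der)
    by (rule f'_cont)
  have "C1W W G1" unfolding G1_def
  proof (rule C1W_sum)
    fix k assume "k < q"
    then have "C1W W (\<lambda>v. fst (OB w f (Suc k) v))" using OBC[of "Suc k"] by simp
    then show "C1W W (\<lambda>v. f (fst (OB w f (Suc k) v)))"
      by (rule C1W_compose[where S=UNIV and \<phi>'="deriv f"]) (auto intro: f_der f'_cont)
  qed
  moreover have "C1W W G2" unfolding G2_def
  proof (intro C1W_diff C1W_fst C1W_const)
    show "C1W W (\<lambda>v. fst (OB w f q v))" using OBC[of q] by simp
  qed
  ultimately show ?thesis using oW v0W SP OBC by blast
qed

lemma NB:
  assumes oW: "open W" and v0W: "v0 \<in> W"
    and C: "\<forall>k\<le>q. C1W W (\<lambda>v. fst (OB w f k v)) \<and> C1W W (\<lambda>v. snd (OB w f k v))"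
    and e: "\<epsilon> > 0"
  shows "\<exists>r>0. \<forall>v. dist v v0 < r \<longrightarrow> v \<in> W \<and>
            (\<forall>k\<le>q. \<bar>fst (OB w f k v) - X k\<bar> < \<epsilon> \<and> \<bar>snd (OB w f k v) - y0\<bar> < \<epsilon>)"
proof -
  have "\<exists>r>0. \<forall>k<Suc q. (\<forall>v. dist v v0 < r \<longrightarrow>
            \<bar>fst (OB w f k v) - X k\<bar> < \<epsilon> \<and> \<bar>snd (OB w f k v) - y0\<bar> < \<epsilon>)"
  proof (rule ex_delta_all)
    fix k assume k: "k < Suc q"
    have c1: "isCont (\<lambda>v. fst (OB w f k v)) v0" "isCont (\<lambda>v. snd (OB w f k v)) v0"
      using C k C1W_cont oW v0W continuous_on_eq_continuous_at by (metis less_Suc_eq_le)+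
    obtain r1 where r1: "r1 > 0" "\<And>v. dist v v0 < r1 \<Longrightarrow> dist (fst (OB w f k v)) (fst (OB w f k v0)) < \<epsilon>"
      using c1(1) e unfolding continuous_at_eps_delta by blast
    obtain r2 where r2: "r2 > 0" "\<And>v. dist v v0 < r2 \<Longrightarrow> dist (snd (OB w f k v)) (snd (OB w f k v0)) < \<epsilon>"
      using c1(2) e unfolding continuous_at_eps_delta by blast
    show "\<exists>r>0. \<forall>v. dist v v0 < r \<longrightarrow>
            \<bar>fst (OB w f k v) - X k\<bar> < \<epsilon> \<and> \<bar>snd (OB w f k v) - y0\<bar> < \<epsilon>"
      using r1 r2 OB_v0[of k] by (intro exI[of _ "min r1 r2"]) (auto simp: dist_real_def)
  qed auto
  then obtain r where r: "r > 0" "\<forall>k<Suc q. (\<forall>v. dist v v0 < r \<longrightarrow>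
            \<bar>fst (OB w f k v) - X k\<bar> < \<epsilon> \<and> \<bar>snd (OB w f k v) - y0\<bar> < \<epsilon>)" by blast
  obtain r' where r': "r' > 0" "ball v0 r' \<subseteq> W" using oW v0W open_contains_ball by blast
  show ?thesis using r r' by (intro exI[of _ "min r r'"]) (auto simp: dist_commute less_Suc_eq_le)
qed

lemma G1_v0: "G1 v0 = (\<Sum>k<q. f (xs k))"
proof -
  have "G1 v0 = (\<Sum>k<q. f (X (Suc k)))" by (simp add: G1_def OB_v0 X_def add.assoc)
  also have "\<dots> = (\<Sum>k<q. f (xs (Suc k)))"
    by (intro sum.cong refl) (metis X_int per_int[OF f_per])
  also have "\<dots> = (\<Sum>k<q. f (xs k))"
  proof -
    have "(\<Sum>k<Suc q. f (xs k)) = f (xs 0) + (\<Sum>k<q. f (xs (Suc k)))" by (rule sum.lessThan_Suc_shift)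
    moreover have "(\<Sum>k<Suc q. f (xs k)) = (\<Sum>k<q. f (xs k)) + f (xs q)" by simp
    ultimately show ?thesis using xs_q by (simp add: xs_def)
  qed
  finally show ?thesis .
qed


lemma cyl_box:
  assumes "r > 0" "ball y0 r \<subseteq> P"
  shows "cyl_nbhd P (x0, y0) ((\<lambda>(x, y). (frac x, y)) ` ({x0-r<..<x0+r} \<times> {y0-r<..<y0+r}))"
  unfolding cyl_nbhd_def
proof
  show "(\<lambda>(x, y). (frac x, y)) ` ({x0 - r<..<x0 + r} \<times> {y0 - r<..<y0 + r}) \<subseteq> {0..<1} \<times> P"
    using assms by (auto simp: frac_lt_1 dist_real_def subset_iff)
  show "\<exists>V. open V \<and> (x0, y0) \<in> V \<and> (\<lambda>(x, y). (frac x, y)) ` V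
     \<subseteq> (\<lambda>(x, y). (frac x, y)) ` ({x0 - r<..<x0 + r} \<times> {y0 - r<..<y0 + r})"
    using assms by (intro exI[of _ "{x0 - r<..<x0 + r} \<times> {y0 - r<..<y0 + r}"])
      (auto intro!: open_Times)
qed

lemma snd_OB_q: "snd (OB w f q v) = fst (snd v) + snd (snd v) * G1 v"
  unfolding G1_def by (rule OB_snd)

lemma part2:
  assumes nz: "(\<Sum>k<q. f (xs k)) \<noteq> 0"
  shows "\<exists>\<epsilon>0>0. \<exists>U. cyl_nbhd P (x0, y0) U \<and>
        (\<forall>\<epsilon>. 0 < \<bar>\<epsilon>\<bar> \<and> \<bar>\<epsilon>\<bar> < \<epsilon>0 \<longrightarrow> (\<forall>p\<in>U. ((Tmap a om d f \<epsilon>) ^^ q) p \<noteq> p))"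
proof -
  obtain \<delta> where \<delta>: "\<delta> > 0" "\<forall>k<q. \<forall>x y. \<bar>x - X k\<bar> < \<delta> \<and> \<bar>y - y0\<bar> < \<delta> \<longrightarrow>
            y \<in> P \<and> IEM a om d y (frac x) = frac (x + w k y)" using LOC by blast
  obtain W where W: "open W" "v0 \<in> W" "C1W W G1"
     "\<forall>k\<le>q. C1W W (\<lambda>v. fst (OB w f k v)) \<and> C1W W (\<lambda>v. snd (OB w f k v))"
    using C1_all by blast
  obtain rn where rn: "rn > 0" "\<And>v. dist v v0 < rn \<Longrightarrow>
            (\<forall>k\<le>q. \<bar>fst (OB w f k v) - X k\<bar> < \<delta> \<and> \<bar>snd (OB w f k v) - y0\<bar> < \<delta>)"
    using NB[OF W(1,2,4) \<delta>(1)] by blast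
  have G0: "G1 v0 \<noteq> 0" using nz G1_v0 by simp
  have ic: "isCont G1 v0" using C1W_cont[OF W(3)] W(1,2) continuous_on_eq_continuous_at by blast
  have "\<bar>G1 v0\<bar> > 0" using G0 by simp
  from ic[unfolded continuous_at_eps_delta, rule_format, OF this]
  obtain rg where rg: "rg > 0" "\<And>v. dist v v0 < rg \<Longrightarrow> dist (G1 v) (G1 v0) < \<bar>G1 v0\<bar>"
    by blast
  obtain \<rho> where \<rho>: "\<rho> > 0" "ball y0 \<rho> \<subseteq> P" using P y0 open_contains_ball by blast
  define r where "r = min (min rn rg / 3) \<rho>"
  have r: "r > 0" "ball y0 r \<subseteq> P" "3 * r \<le> rn" "3 * r \<le> rg" using rn rg \<rho> unfolding r_def by auto
  define U where "U = (\<lambda>(x, y). (frac x, y)) ` ({x0-r<..<x0+r} \<times> {y0-r<..<y0+r})"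
  have H: "\<forall>p\<in>U. ((Tmap a om d f \<epsilon>) ^^ q) p \<noteq> p" if e: "0 < \<bar>\<epsilon>\<bar>" "\<bar>\<epsilon>\<bar> < r" for \<epsilon>
  proof
    fix p assume "p \<in> U"
    then obtain z where z: "z \<in> {x0-r<..<x0+r} \<times> {y0-r<..<y0+r}" "p = (\<lambda>(x, y). (frac x, y)) z"
      unfolding U_def by blast
    obtain x y where xyz: "z = (x, y)" by (cases z)
    have p: "p = (frac x, y)" using z xyz by simp
    have xy: "\<bar>x - x0\<bar> < r" "\<bar>y - y0\<bar> < r" using z(1) xyz by (auto simp: abs_less_iff)
    define v where "v = (x, y, \<epsilon>)"
    have "dist v v0 \<le> \<bar>x - x0\<bar> + \<bar>y - y0\<bar> + \<bar>\<epsilon> - 0\<bar>" unfolding v_def v0_def by (rule dist3_le)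
    then have dv: "dist v v0 < 3 * r" using xy e by simp
    have dn: "dist v v0 < rn" "dist v v0 < rg" using dv r by linarith+
    have bnd: "\<forall>k\<le>q. \<bar>fst (OB w f k v) - X k\<bar> < \<delta> \<and> \<bar>snd (OB w f k v) - y0\<bar> < \<delta>"
      using rn(2)[OF dn(1)] .
    then have bnd': "\<forall>k<q. \<bar>fst (OB w f k v) - X k\<bar> < \<delta> \<and> \<bar>snd (OB w f k v) - y0\<bar> < \<delta>"
      by auto
    have T0: "(Tmap a om d f (snd (snd v)) ^^ q) (frac (fst v), fst (snd v))
           = (frac (fst (OB w f q v)), snd (OB w f q v))"
      by (rule COMP[OF \<delta>(2) order_refl bnd'])
    have T: "((Tmap a om d f \<epsilon>) ^^ q) p = (frac (fst (OB w f q v)), snd (OB w f q v))"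
      using T0 unfolding p by (simp add: v_def)
    have "dist (G1 v) (G1 v0) < \<bar>G1 v0\<bar>" by (rule rg(2)[OF dn(2)])
    then have "G1 v \<noteq> 0" by (auto simp: dist_real_def)
    then have "\<epsilon> * G1 v \<noteq> 0" using e by simp
    then have "snd (OB w f q v) \<noteq> y" using snd_OB_q[of v] by (simp add: v_def)
    then show "((Tmap a om d f \<epsilon>) ^^ q) p \<noteq> p" using T p by (metis prod.inject)
  qed
  have A: "\<forall>\<epsilon>. 0 < \<bar>\<epsilon>\<bar> \<and> \<bar>\<epsilon>\<bar> < r \<longrightarrow> (\<forall>p\<in>U. ((Tmap a om d f \<epsilon>) ^^ q) p \<noteq> p)"
    using H by blast
  have C: "cyl_nbhd P (x0, y0) U" unfolding U_def by (rule cyl_box[OF r(1,2)])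
  show ?thesis using A C r(1) by blast
qed

end

lemma partial_x:
  assumes "(g has_derivative (\<lambda>h. D \<bullet> h)) (at (x0::real, y0::real, e0::real))"
  shows "((\<lambda>x. g (x, y0, e0)) has_real_derivative fst D) (at x0)"
proof -
  have e: "((\<lambda>x. (x, y0, e0)) has_derivative (\<lambda>h. (h, 0, 0))) (at x0)"
    by (rule has_derivative_eq_rhs[OF has_derivative_Pair[OF has_derivative_ident has_derivative_const]])
       (simp add: zero_prod_def)
  from diff_chain_at[OF e] assms
  have "((\<lambda>x. g (x, y0, e0)) has_derivative (\<lambda>h. D \<bullet> (h, 0, 0))) (at x0)" by (simp add: o_def)
  then show ?thesis unfolding has_field_derivative_def
    by (rule has_derivative_eq_rhs) (auto simp: fun_eq_iff inner_prod_def)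
qed

lemma partial_y:
  assumes "(g has_derivative (\<lambda>h. D \<bullet> h)) (at (x0::real, y0::real, e0::real))"
  shows "((\<lambda>y. g (x0, y, e0)) has_real_derivative fst (snd D)) (at y0)"
proof -
  have e: "((\<lambda>y. (x0, y, e0)) has_derivative (\<lambda>h. (0, h, 0))) (at y0)"
    by (auto intro!: derivative_eq_intros)
  from diff_chain_at[OF e] assms
  have "((\<lambda>y. g (x0, y, e0)) has_derivative (\<lambda>h. D \<bullet> (0, h, 0))) (at y0)" by (simp add: o_def)
  then show ?thesis unfolding has_field_derivative_def
    by (rule has_derivative_eq_rhs) (auto simp: fun_eq_iff inner_prod_def)
qed

lemma int_abs_lt1: "(z::real) \<in> \<int> \<Longrightarrow> \<bar>z\<bar> < 1 \<Longrightarrow> z = 0"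
  by (metis Ints_cases of_int_0 of_int_abs of_int_less_1_iff zero_less_abs_iff int_one_le_iff_zero_less not_less)

lemma frac_eq_Ints: "frac a = frac b \<Longrightarrow> a - b \<in> \<int>"
proof -
  assume "frac a = frac b"
  then have "a - b = of_int (\<lfloor>a\<rfloor> - \<lfloor>b\<rfloor>)" unfolding frac_def by simp
  then show ?thesis by (simp only: Ints_of_int)
qed

context setting begin

lemma f_shift_der: "((\<lambda>x. f (x + c)) has_real_derivative deriv f (x0 + c)) (at x0)"
proof -
  have "((\<lambda>x. f (x + c)) has_real_derivative deriv f (x0 + c) * 1) (at x0)"
    by (rule DERIV_chain2[OF f_der]) (auto intro!: derivative_eq_intros)
  then show ?thesis by simp
qed

lemma G1_dx: "((\<lambda>x. G1 (x, y0, 0)) has_real_derivative (\<Sum>k<q. deriv f (xs k))) (at x0)"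
proof -
  have eq: "(\<lambda>x. G1 (x, y0, 0)) = (\<lambda>x. \<Sum>k<q. f (x + (\<Sum>j<Suc k. w j y0)))"
    by (simp add: G1_def OB_eps0 fun_eq_iff)
  have "((\<lambda>x. \<Sum>k<q. f (x + (\<Sum>j<Suc k. w j y0))) has_real_derivative
          (\<Sum>k<q. deriv f (x0 + (\<Sum>j<Suc k. w j y0)))) (at x0)"
    by (intro DERIV_sum f_shift_der)
  moreover have "(\<Sum>k<q. deriv f (x0 + (\<Sum>j<Suc k. w j y0))) = (\<Sum>k<q. deriv f (xs k))"
  proof -
    have "(\<Sum>k<q. deriv f (x0 + (\<Sum>j<Suc k. w j y0))) = (\<Sum>k<q. deriv f (xs (Suc k)))"
      by (intro sum.cong refl) (metis X_def X_int per_deriv[OF f_per] f_diff)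
    also have "\<dots> = (\<Sum>k<q. deriv f (xs k))"
    proof -
      have "(\<Sum>k<Suc q. deriv f (xs k)) = deriv f (xs 0) + (\<Sum>k<q. deriv f (xs (Suc k)))" by (rule sum.lessThan_Suc_shift)
      moreover have "(\<Sum>k<Suc q. deriv f (xs k)) = (\<Sum>k<q. deriv f (xs k)) + deriv f (xs q)" by simp
      ultimately show ?thesis using xs_q by (simp add: xs_def)
    qed
    finally show ?thesis .
  qed
  ultimately show ?thesis unfolding eq by simp
qed

lemma G2_dx: "((\<lambda>x. G2 (x, y0, 0)) has_real_derivative 0) (at x0)"
proof -
  have eq: "(\<lambda>x. G2 (x, y0, 0)) = (\<lambda>x. (\<Sum>j<q. w j y0) - of_int m)"
    by (simp add: G2_def OB_eps0 fun_eq_iff)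
  show ?thesis unfolding eq by (rule DERIV_const)
qed

lemma w_deriv: "(w k has_real_derivative deriv (w k) y0) (at y0)"
  using w_der[OF y0, of k] DERIV_imp_deriv by metis

lemma G2_dy: "((\<lambda>y. G2 (x0, y, 0)) has_real_derivative (\<Sum>k<q. deriv (w k) y0)) (at y0)"
proof -
  have eq: "(\<lambda>y. G2 (x0, y, 0)) = (\<lambda>y. (\<Sum>j<q. w j y) - of_int m)"
    by (simp add: G2_def OB_eps0 fun_eq_iff)
  show ?thesis unfolding eq
    by (auto intro!: DERIV_sum w_deriv derivative_eq_intros)
qed

definition "Psi v = (G1 v, G2 v, snd (snd v))"

lemma Psi_v0: assumes "(\<Sum>k<q. f (xs k)) = 0" shows "Psi v0 = (0, 0, 0)"
proof -
  have "G2 v0 = fst (OB w f q v0) - fst v0 - of_int m" by (simp add: G2_def)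
  also have "\<dots> = 0" using X_q by (simp add: OB_v0) (simp add: v0_def)
  finally show ?thesis using assms G1_v0 by (simp add: Psi_def v0_def)
qed

lemma IFT:
  assumes s0: "(\<Sum>k<q. f (xs k)) = 0"
    and M: "(\<Sum>k<q. deriv f (xs k)) * (\<Sum>k<q. deriv (w k) y0) \<noteq> 0"
  shows "\<exists>W U' V g. open W \<and> v0 \<in> W \<and>
     (\<forall>k\<le>q. C1W W (\<lambda>v. fst (OB w f k v)) \<and> C1W W (\<lambda>v. snd (OB w f k v)))
     \<and> open U' \<and> U' \<subseteq> W \<and> v0 \<in> U' \<and> open V \<and> (0, 0, 0) \<in> V \<and> homeomorphism U' V Psi g"
proof -
  obtain W where W: "open W" "v0 \<in> W" "C1W W G1" "C1W W G2"
     "\<forall>k\<le>q. C1W W (\<lambda>v. fst (OB w f k v)) \<and> C1W W (\<lambda>v. snd (OB w f k v))"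
    using C1_all by blast
  obtain D1 where D1: "continuous_on W D1" "\<And>v. v \<in> W \<Longrightarrow> (G1 has_derivative (\<lambda>h. D1 v \<bullet> h)) (at v)"
    using W(3) unfolding C1W_def by blast
  obtain D2 where D2: "continuous_on W D2" "\<And>v. v \<in> W \<Longrightarrow> (G2 has_derivative (\<lambda>h. D2 v \<bullet> h)) (at v)"
    using W(4) unfolding C1W_def by blast
  define F' where "F' v = Blinfun (\<lambda>h::real\<times>real\<times>real. (D1 v \<bullet> h, D2 v \<bullet> h, snd (snd h)))" for v
  have bl: "bounded_linear (\<lambda>h::real\<times>real\<times>real. (D1 v \<bullet> h, D2 v \<bullet> h, snd (snd h)))" for v
    by (intro bounded_linear_intros)
  have app: "blinfun_apply (F' v) = (\<lambda>h. (D1 v \<bullet> h, D2 v \<bullet> h, snd (snd h)))" for v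
    unfolding F'_def using bl bounded_linear_Blinfun_apply by blast
  have der: "(Psi has_derivative blinfun_apply (F' v)) (at v)" if "v \<in> W" for v
    unfolding app Psi_def
    by (intro has_derivative_Pair D1(2) D2(2) that has_derivative_snd has_derivative_ident)
  have "F' = (\<lambda>v. blinfun_of_matrix (\<lambda>i j. blinfun_apply (F' v) j \<bullet> i))"
    by (simp add: blinfun_of_matrix_works)
  moreover have "continuous_on W (\<lambda>v. blinfun_of_matrix (\<lambda>i j. blinfun_apply (F' v) j \<bullet> i))"
    unfolding app by (intro continuous_on_blinfun_of_matrix continuous_intros D1(1) D2(1))
  ultimately have cont: "continuous_on W F'" by metis
  obtain A B1 C1 where d1: "D1 v0 = (A, B1, C1)" by (cases "D1 v0") auto
  obtain Z Dy E where d2: "D2 v0 = (Z, Dy, E)" by (cases "D2 v0") auto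
  have "((\<lambda>x. G1 (x, y0, 0)) has_real_derivative fst (D1 v0)) (at x0)"
    using partial_x D1(2)[OF W(2)] unfolding v0_def by blast
  then have A: "A = (\<Sum>k<q. deriv f (xs k))" using G1_dx d1 DERIV_unique by fastforce
  have "((\<lambda>x. G2 (x, y0, 0)) has_real_derivative fst (D2 v0)) (at x0)"
    using partial_x D2(2)[OF W(2)] unfolding v0_def by blast
  then have Z: "Z = 0" using G2_dx d2 DERIV_unique by fastforce
  have "((\<lambda>y. G2 (x0, y, 0)) has_real_derivative fst (snd (D2 v0))) (at y0)"
    using partial_y D2(2)[OF W(2)] unfolding v0_def by blast
  then have Dy: "Dy = (\<Sum>k<q. deriv (w k) y0)" using G2_dy d2 DERIV_unique by fastforce
  have A0: "A \<noteq> 0" and Dy0: "Dy \<noteq> 0" using M A Dy by auto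
  define invf where "invf = Blinfun (\<lambda>u::real\<times>real\<times>real.
      ((1 / A) * fst u + (- B1 / (A * Dy)) * fst (snd u) + ((B1 * E / Dy - C1) / A) * snd (snd u),
       (1 / Dy) * fst (snd u) + (- E / Dy) * snd (snd u), snd (snd u)))"
  have blinv: "bounded_linear (\<lambda>u::real\<times>real\<times>real.
      ((1 / A) * fst u + (- B1 / (A * Dy)) * fst (snd u) + ((B1 * E / Dy - C1) / A) * snd (snd u),
       (1 / Dy) * fst (snd u) + (- E / Dy) * snd (snd u), snd (snd u)))"
    by (intro bounded_linear_intros)
  have inv: "invf o\<^sub>L F' v0 = id_blinfun"
  proof (rule blinfun_eqI)
    fix h :: "real\<times>real\<times>real"
    obtain h1 h2 h3 where h: "h = (h1, h2, h3)" by (cases h) auto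
    have Fh: "blinfun_apply (F' v0) h = (A*h1 + B1*h2 + C1*h3, Dy*h2 + E*h3, h3)"
      unfolding app d1 d2 Z h by (simp add: inner_prod_def)
    have ih: "blinfun_apply invf (p1, p2, p3) = ((1 / A) * p1 + (- B1 / (A * Dy)) * p2 + ((B1 * E / Dy - C1) / A) * p3,
       (1 / Dy) * p2 + (- E / Dy) * p3, p3)" for p1 p2 p3
      unfolding invf_def bounded_linear_Blinfun_apply[OF blinv] by simp
    have c2: "(1/Dy) * (Dy*h2 + E*h3) + (-E/Dy)*h3 = h2" using Dy0 by (simp add: field_simps)
    have c1: "(1/A)*(A*h1 + B1*h2 + C1*h3) + (-B1/(A*Dy))*(Dy*h2+E*h3) + ((B1*E/Dy - C1)/A)*h3 = h1"
      using A0 Dy0 by (simp add: field_simps)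
    show "blinfun_apply (invf o\<^sub>L F' v0) h = blinfun_apply id_blinfun h"
      unfolding blinfun_apply_blinfun_compose Fh ih c1 c2 by (simp add: h)
  qed
  have "\<exists>U' V g. open U' \<and> U' \<subseteq> W \<and> v0 \<in> U' \<and> open V \<and> Psi v0 \<in> V \<and> homeomorphism U' V Psi g"
  proof (rule inverse_function_theorem[OF W(1) der cont W(2) inv])
    fix U' V g g' assume r: "open U'" "U' \<subseteq> W" "v0 \<in> U'" "open V" "Psi v0 \<in> V"
      "homeomorphism U' V Psi g"
      "\<And>y. y \<in> V \<Longrightarrow> (g has_derivative (g' y)) (at y)"
      "\<And>y. y \<in> V \<Longrightarrow> g' y = inv (blinfun_apply (F'(g y)))"
      "\<And>y. y \<in> V \<Longrightarrow> bij (blinfun_apply (F'(g y)))"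
    show "\<exists>U' V g. open U' \<and> U' \<subseteq> W \<and> v0 \<in> U' \<and> open V \<and> Psi v0 \<in> V \<and> homeomorphism U' V Psi g"
      using r(1-6) by blast
  qed
  then obtain U' V g where IF: "open U'" "U' \<subseteq> W" "v0 \<in> U'" "open V" "Psi v0 \<in> V"
      "homeomorphism U' V Psi g" by blast
  show ?thesis
    apply (rule exI[of _ W], rule exI[of _ U'], rule exI[of _ V], rule exI[of _ g])
    using IF W Psi_v0[OF s0] by simp
qed

lemma part1:
  assumes s0: "(\<Sum>k<q. f (xs k)) = 0"
    and M: "(\<Sum>k<q. deriv f (xs k)) * (\<Sum>k<q. deriv (w k) y0) \<noteq> 0"
  shows "\<exists>\<epsilon>0>0. \<exists>U. cyl_nbhd P (x0, y0) U \<and>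
        (\<exists>X :: real \<Rightarrow> real \<times> real.
           continuous_on {\<epsilon>. 0 < \<bar>\<epsilon>\<bar> \<and> \<bar>\<epsilon>\<bar> < \<epsilon>0} X \<and>
           (X \<longlongrightarrow> (x0, y0)) (at 0) \<and>
           (\<forall>\<epsilon>. 0 < \<bar>\<epsilon>\<bar> \<and> \<bar>\<epsilon>\<bar> < \<epsilon>0 \<longrightarrow>
              (frac (fst (X \<epsilon>)), snd (X \<epsilon>)) \<in> U \<and>
              ((Tmap a om d f \<epsilon>) ^^ q) (frac (fst (X \<epsilon>)), snd (X \<epsilon>))
                 = (frac (fst (X \<epsilon>)), snd (X \<epsilon>)) \<and>
              (\<forall>p\<in>U. ((Tmap a om d f \<epsilon>) ^^ q) p = p \<longrightarrow>
                       p = (frac (fst (X \<epsilon>)), snd (X \<epsilon>)))))"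
proof -
  obtain W U' V g where I: "open W" "v0 \<in> W"
     "\<forall>k\<le>q. C1W W (\<lambda>v. fst (OB w f k v)) \<and> C1W W (\<lambda>v. snd (OB w f k v))"
     "open U'" "U' \<subseteq> W" "v0 \<in> U'" "open V" "(0, 0, 0) \<in> V" "homeomorphism U' V Psi g"
    using IFT[OF s0 M] by blast
  have gPsi: "\<And>v. v \<in> U' \<Longrightarrow> g (Psi v) = v" and Psig: "\<And>z. z \<in> V \<Longrightarrow> Psi (g z) = z"
    and gV: "g ` V = U'" and gc: "continuous_on V g"
    using I(9) unfolding homeomorphism_def by auto
  obtain \<delta> where \<delta>: "\<delta> > 0" "\<forall>k<q. \<forall>x y. \<bar>x - X k\<bar> < \<delta> \<and> \<bar>y - y0\<bar> < \<delta> \<longrightarrow>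
            y \<in> P \<and> IEM a om d y (frac x) = frac (x + w k y)" using LOC by blast
  define \<delta>' where "\<delta>' = min \<delta> (1/2)"
  have \<delta>': "\<delta>' > 0" "\<delta>' \<le> \<delta>" "\<delta>' \<le> 1/2" using \<delta> unfolding \<delta>'_def by auto
  have \<delta>2: "\<forall>k<q. \<forall>x y. \<bar>x - X k\<bar> < \<delta>' \<and> \<bar>y - y0\<bar> < \<delta>' \<longrightarrow>
            y \<in> P \<and> IEM a om d y (frac x) = frac (x + w k y)"
  proof (intro allI impI)
    fix k x y assume "k < q" "\<bar>x - X k\<bar> < \<delta>' \<and> \<bar>y - y0\<bar> < \<delta>'"
    moreover have "\<bar>x - X k\<bar> < \<delta> \<and> \<bar>y - y0\<bar> < \<delta>" using calculation(2) \<delta>'(2) by linarith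
    ultimately show "y \<in> P \<and> IEM a om d y (frac x) = frac (x + w k y)" using \<delta>(2) by blast
  qed
  obtain rn where rn: "rn > 0" "\<And>v. dist v v0 < rn \<Longrightarrow>
            (\<forall>k\<le>q. \<bar>fst (OB w f k v) - X k\<bar> < \<delta>' \<and> \<bar>snd (OB w f k v) - y0\<bar> < \<delta>')"
    using NB[OF I(1,2,3) \<delta>'(1)] by blast
  obtain ru where ru: "ru > 0" "ball v0 ru \<subseteq> U'" using I(4,6) open_contains_ball by blast
  obtain \<rho> where \<rho>: "\<rho> > 0" "ball y0 \<rho> \<subseteq> P" using P y0 open_contains_ball by blast
  define r where "r = min (min (min rn ru / 3) \<rho>) (1/2)"
  have r: "r > 0" "ball y0 r \<subseteq> P" "3 * r \<le> rn" "3 * r \<le> ru" "r \<le> 1/2"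
    using rn ru \<rho> unfolding r_def by auto
  define z0 where "z0 = (0::real, 0::real, 0::real)"
  have Psi0: "Psi v0 = z0" using Psi_v0[OF s0] unfolding z0_def .
  have gz0: "g z0 = v0" using gPsi[OF I(6)] Psi0 by simp
  have z0V: "z0 \<in> V" using I(8) unfolding z0_def .
  have icg: "isCont g z0" using gc I(7) z0V continuous_on_eq_continuous_at by blast
  obtain eg1 where eg1: "eg1 > 0" "\<And>z. dist z z0 < eg1 \<Longrightarrow> dist (g z) (g z0) < r"
    using icg[unfolded continuous_at_eps_delta, rule_format, OF r(1)] by blast
  obtain eg2 where eg2: "eg2 > 0" "ball z0 eg2 \<subseteq> V" using I(7) z0V open_contains_ball by blast
  define \<epsilon>0 where "\<epsilon>0 = min (min eg1 eg2) r"
  have e0: "\<epsilon>0 > 0" "\<epsilon>0 \<le> eg1" "\<epsilon>0 \<le> eg2" "\<epsilon>0 \<le> r" using eg1 eg2 r unfolding \<epsilon>0_def by auto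
  define Z where "Z \<epsilon> = (0::real, 0::real, \<epsilon>::real)" for \<epsilon>
  have dZ: "dist (Z \<epsilon>) z0 \<le> \<bar>\<epsilon>\<bar>" for \<epsilon>
    using dist3_le[of 0 0 \<epsilon> 0 0 0] unfolding Z_def z0_def by simp
  define Xf where "Xf \<epsilon> = (fst (g (Z \<epsilon>)), fst (snd (g (Z \<epsilon>))))" for \<epsilon>
  define U where "U = (\<lambda>(x, y). (frac x, y)) ` ({x0-r<..<x0+r} \<times> {y0-r<..<y0+r})"
  have ZV: "Z \<epsilon> \<in> V" if "\<bar>\<epsilon>\<bar> < \<epsilon>0" for \<epsilon>
  proof -
    have "dist z0 (Z \<epsilon>) < eg2" using dZ[of \<epsilon>] that e0 by (simp add: dist_commute)
    then show ?thesis using eg2(2) by auto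
  qed
  have gZ: "dist (g (Z \<epsilon>)) v0 < r" if "\<bar>\<epsilon>\<bar> < \<epsilon>0" for \<epsilon>
    using eg1(2)[of "Z \<epsilon>"] dZ[of \<epsilon>] that e0 gz0 by simp
  have uform: "g (Z \<epsilon>) = (fst (Xf \<epsilon>), snd (Xf \<epsilon>), \<epsilon>) \<and> G1 (g (Z \<epsilon>)) = 0 \<and> G2 (g (Z \<epsilon>)) = 0"
    if "\<bar>\<epsilon>\<bar> < \<epsilon>0" for \<epsilon>
  proof -
    have "Psi (g (Z \<epsilon>)) = Z \<epsilon>" using Psig ZV that by blast
    then have "G1 (g (Z \<epsilon>)) = 0" "G2 (g (Z \<epsilon>)) = 0" "snd (snd (g (Z \<epsilon>))) = \<epsilon>"
      unfolding Psi_def Z_def by auto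
    moreover have "g (Z \<epsilon>) = (fst (g (Z \<epsilon>)), fst (snd (g (Z \<epsilon>))), snd (snd (g (Z \<epsilon>))))" by simp
    ultimately show ?thesis unfolding Xf_def by simp
  qed
  have key: "(frac (fst (Xf \<epsilon>)), snd (Xf \<epsilon>)) \<in> U \<and>
              ((Tmap a om d f \<epsilon>) ^^ q) (frac (fst (Xf \<epsilon>)), snd (Xf \<epsilon>))
                 = (frac (fst (Xf \<epsilon>)), snd (Xf \<epsilon>)) \<and>
              (\<forall>p\<in>U. ((Tmap a om d f \<epsilon>) ^^ q) p = p \<longrightarrow>
                       p = (frac (fst (Xf \<epsilon>)), snd (Xf \<epsilon>)))"
    if e: "0 < \<bar>\<epsilon>\<bar>" "\<bar>\<epsilon>\<bar> < \<epsilon>0" for \<epsilon>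
  proof -
    define u where "u = g (Z \<epsilon>)"
    define X1 where "X1 = fst (Xf \<epsilon>)"
    define X2 where "X2 = snd (Xf \<epsilon>)"
    have u: "u = (X1, X2, \<epsilon>)" "G1 u = 0" "G2 u = 0" using uform[OF e(2)] unfolding u_def X1_def X2_def by auto
    have du: "dist u v0 < r" using gZ[OF e(2)] unfolding u_def .
    have "\<bar>X1 - x0\<bar> \<le> dist u v0" using dist_fst_le[of u v0] unfolding u v0_def by (simp add: dist_real_def)
    then have X1r: "\<bar>X1 - x0\<bar> < r" using du by linarith
    have "\<bar>X2 - y0\<bar> \<le> dist u v0"
      using dist_fst_le[of "snd u" "snd v0"] dist_snd_le[of u v0] unfolding u v0_def by (simp add: dist_real_def)
    then have X2r: "\<bar>X2 - y0\<bar> < r" using du by linarith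
    have inU: "(frac X1, X2) \<in> U" unfolding U_def using X1r X2r
      by (intro image_eqI[of _ _ "(X1, X2)"]) (auto simp: abs_less_iff)
    have bu: "\<forall>k<q. \<bar>fst (OB w f k u) - X k\<bar> < \<delta>' \<and> \<bar>snd (OB w f k u) - y0\<bar> < \<delta>'"
      using rn(2)[of u] du r by auto
    have Tu: "((Tmap a om d f \<epsilon>) ^^ q) (frac X1, X2) = (frac (fst (OB w f q u)), snd (OB w f q u))"
      using COMP[OF \<delta>2 order_refl bu] unfolding u(1) by simp
    have s1: "snd (OB w f q u) = X2" using snd_OB_q[of u] u by simp
    have s2: "fst (OB w f q u) = X1 + of_int m" using u unfolding G2_def by simp
    have fixp: "((Tmap a om d f \<epsilon>) ^^ q) (frac X1, X2) = (frac X1, X2)"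
      using Tu s1 s2 by simp
    have uniq: "p = (frac X1, X2)" if pU: "p \<in> U" and pf: "((Tmap a om d f \<epsilon>) ^^ q) p = p" for p
    proof -
      obtain zz where zz: "zz \<in> {x0-r<..<x0+r} \<times> {y0-r<..<y0+r}" "p = (\<lambda>(x, y). (frac x, y)) zz"
        using pU unfolding U_def by blast
      obtain x y where xyz: "zz = (x, y)" by (cases zz)
      have p: "p = (frac x, y)" using zz xyz by simp
      have xy: "\<bar>x - x0\<bar> < r" "\<bar>y - y0\<bar> < r" using zz(1) xyz by (auto simp: abs_less_iff)
      define v where "v = (x, y, \<epsilon>)"
      have "dist v v0 \<le> \<bar>x - x0\<bar> + \<bar>y - y0\<bar> + \<bar>\<epsilon> - 0\<bar>" unfolding v_def v0_def by (rule dist3_le)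
      then have dv: "dist v v0 < 3 * r" using xy e e0 by simp
      have dn: "dist v v0 < rn" "dist v v0 < ru" using dv r by linarith+
      have "v \<in> ball v0 ru" using dn(2) by (simp add: dist_commute)
      then have vU: "v \<in> U'" using ru(2) by blast
      have bnd: "\<forall>k\<le>q. \<bar>fst (OB w f k v) - X k\<bar> < \<delta>' \<and> \<bar>snd (OB w f k v) - y0\<bar> < \<delta>'"
        using rn(2)[OF dn(1)] .
      then have bnd': "\<forall>k<q. \<bar>fst (OB w f k v) - X k\<bar> < \<delta>' \<and> \<bar>snd (OB w f k v) - y0\<bar> < \<delta>'"
        by auto
      have T0: "(Tmap a om d f (snd (snd v)) ^^ q) (frac (fst v), fst (snd v))
           = (frac (fst (OB w f q v)), snd (OB w f q v))"
        by (rule COMP[OF \<delta>2 order_refl bnd'])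
      then have T: "((Tmap a om d f \<epsilon>) ^^ q) p = (frac (fst (OB w f q v)), snd (OB w f q v))"
        unfolding p by (simp add: v_def)
      then have eqs: "snd (OB w f q v) = y" "frac (fst (OB w f q v)) = frac x" using pf p by auto
      have "\<epsilon> * G1 v = 0" using eqs(1) snd_OB_q[of v] by (simp add: v_def)
      then have g1: "G1 v = 0" using e by simp
      have "fst (OB w f q v) - x \<in> \<int>" using frac_eq_Ints[OF eqs(2)] .
      then have "fst (OB w f q v) - x - of_int m \<in> \<int>" by (simp add: Ints_diff)
      moreover have "\<bar>fst (OB w f q v) - X q\<bar> < \<delta>'" using bnd by simp
      then have "\<bar>fst (OB w f q v) - x - of_int m\<bar> < 1" using X_q xy r \<delta>' by (simp add: abs_less_iff)
      ultimately have "fst (OB w f q v) - x - of_int m = 0" by (rule int_abs_lt1)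
      then have g2: "G2 v = 0" unfolding G2_def by (simp add: v_def)
      have "Psi v = Z \<epsilon>" unfolding Psi_def Z_def using g1 g2 by (simp add: v_def)
      then have "v = u" using gPsi[OF vU] unfolding u_def by simp
      then show ?thesis using p u(1) unfolding v_def by simp
    qed
    show ?thesis using inU fixp uniq unfolding X1_def X2_def by blast
  qed
  have contX: "continuous_on {\<epsilon>. 0 < \<bar>\<epsilon>\<bar> \<and> \<bar>\<epsilon>\<bar> < \<epsilon>0} Xf"
  proof -
    have "continuous_on {\<epsilon>. 0 < \<bar>\<epsilon>\<bar> \<and> \<bar>\<epsilon>\<bar> < \<epsilon>0} (\<lambda>\<epsilon>. g (Z \<epsilon>))"
    proof (rule continuous_on_compose2[OF gc])
      show "continuous_on {\<epsilon>. 0 < \<bar>\<epsilon>\<bar> \<and> \<bar>\<epsilon>\<bar> < \<epsilon>0} Z" unfolding Z_def by (intro continuous_intros)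
      show "Z ` {\<epsilon>. 0 < \<bar>\<epsilon>\<bar> \<and> \<bar>\<epsilon>\<bar> < \<epsilon>0} \<subseteq> V" using ZV by auto
    qed
    then show ?thesis unfolding Xf_def by (intro continuous_intros)
  qed
  have limX: "(Xf \<longlongrightarrow> (x0, y0)) (at 0)"
  proof -
    have "isCont Z 0" unfolding Z_def by (intro continuous_intros)
    moreover have "Z 0 = z0" unfolding Z_def z0_def by simp
    ultimately have "isCont (\<lambda>\<epsilon>. g (Z \<epsilon>)) 0" using icg by (simp add: isCont_o2)
    then have "isCont Xf 0" unfolding Xf_def by (intro continuous_intros)
    moreover have "Xf 0 = (x0, y0)" unfolding Xf_def using \<open>Z 0 = z0\<close> gz0 by (simp add: v0_def)
    ultimately show ?thesis by (metis isCont_def)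
  qed
  have C: "cyl_nbhd P (x0, y0) U" unfolding U_def by (rule cyl_box[OF r(1,2)])
  show ?thesis
    apply (rule exI[of _ \<epsilon>0])
    apply (intro conjI e0(1))
    apply (rule exI[of _ U])
    apply (intro conjI C)
    apply (rule exI[of _ Xf])
    using contX limX key by blast
qed

end

theorem mainTheorem15:
  fixes a om :: "nat \<Rightarrow> real \<Rightarrow> real" and d q :: nat and P :: "real set"
    and f :: "real \<Rightarrow> real" and x0 y0 :: real
  assumes P: "open P" "is_interval P" "P \<noteq> {}"
    and fam: "IEM_family a om d P"
    and f_smooth: "smooth_fun f"
    and f_per: "\<forall>x. f (x + 1) = f x"
    and q: "q \<ge> 1"
    and y0: "y0 \<in> P"
    and x0: "x0 \<in> {0..<1}"
    and per: "((Tmap a om d f 0) ^^ q) (x0, y0) = (x0, y0)"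
    and int: "\<forall>k<q. (IEM a om d y0 ^^ k) x0
                \<in> elem_J_int a d (elem_idx a d y0 ((IEM a om d y0 ^^ k) x0)) y0"
  shows
   "((\<Sum>k<q. f ((IEM a om d y0 ^^ k) x0)) = 0 \<and>
     (\<Sum>k<q. deriv f ((IEM a om d y0 ^^ k) x0)) *
     (\<Sum>k<q. deriv (om (elem_idx a d y0 ((IEM a om d y0 ^^ k) x0))) y0) \<noteq> 0
     \<longrightarrow>
     (\<exists>\<epsilon>0>0. \<exists>U. cyl_nbhd P (x0, y0) U \<and>
        (\<exists>X :: real \<Rightarrow> real \<times> real.
           continuous_on {\<epsilon>. 0 < \<bar>\<epsilon>\<bar> \<and> \<bar>\<epsilon>\<bar> < \<epsilon>0} X \<and>
           (X \<longlongrightarrow> (x0, y0)) (at 0) \<and>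
           (\<forall>\<epsilon>. 0 < \<bar>\<epsilon>\<bar> \<and> \<bar>\<epsilon>\<bar> < \<epsilon>0 \<longrightarrow>
              (frac (fst (X \<epsilon>)), snd (X \<epsilon>)) \<in> U \<and>
              ((Tmap a om d f \<epsilon>) ^^ q) (frac (fst (X \<epsilon>)), snd (X \<epsilon>))
                 = (frac (fst (X \<epsilon>)), snd (X \<epsilon>)) \<and>
              (\<forall>p\<in>U. ((Tmap a om d f \<epsilon>) ^^ q) p = p \<longrightarrow>
                       p = (frac (fst (X \<epsilon>)), snd (X \<epsilon>)))))))
    \<and>
    ((\<Sum>k<q. f ((IEM a om d y0 ^^ k) x0)) \<noteq> 0
     \<longrightarrow>
     (\<exists>\<epsilon>0>0. \<exists>U. cyl_nbhd P (x0, y0) U \<and>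
        (\<forall>\<epsilon>. 0 < \<bar>\<epsilon>\<bar> \<and> \<bar>\<epsilon>\<bar> < \<epsilon>0 \<longrightarrow>
           (\<forall>p\<in>U. ((Tmap a om d f \<epsilon>) ^^ q) p \<noteq> p))))"
proof -
  have st: "setting a om d q P f x0 y0"
    unfolding setting_def using P(1) fam f_smooth f_per q y0 x0 per int by blast
  interpret S: setting a om d q P f x0 y0 by (fact st)
  show ?thesis
  proof (intro conjI impI)
    assume h: "(\<Sum>k<q. f ((IEM a om d y0 ^^ k) x0)) = 0 \<and>
     (\<Sum>k<q. deriv f ((IEM a om d y0 ^^ k) x0)) *
     (\<Sum>k<q. deriv (om (elem_idx a d y0 ((IEM a om d y0 ^^ k) x0))) y0) \<noteq> 0"
    have h1: "(\<Sum>k<q. f (S.xs k)) = 0" using h unfolding S.xs_def by simp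
    have h2: "(\<Sum>k<q. deriv f (S.xs k)) * (\<Sum>k<q. deriv (S.w k) y0) \<noteq> 0"
      using h unfolding S.xs_def S.w_def S.al_def by simp
    show "\<exists>\<epsilon>0>0. \<exists>U. cyl_nbhd P (x0, y0) U \<and>
        (\<exists>X :: real \<Rightarrow> real \<times> real.
           continuous_on {\<epsilon>. 0 < \<bar>\<epsilon>\<bar> \<and> \<bar>\<epsilon>\<bar> < \<epsilon>0} X \<and>
           (X \<longlongrightarrow> (x0, y0)) (at 0) \<and>
           (\<forall>\<epsilon>. 0 < \<bar>\<epsilon>\<bar> \<and> \<bar>\<epsilon>\<bar> < \<epsilon>0 \<longrightarrow>
              (frac (fst (X \<epsilon>)), snd (X \<epsilon>)) \<in> U \<and>
              ((Tmap a om d f \<epsilon>) ^^ q) (frac (fst (X \<epsilon>)), snd (X \<epsilon>))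
                 = (frac (fst (X \<epsilon>)), snd (X \<epsilon>)) \<and>
              (\<forall>p\<in>U. ((Tmap a om d f \<epsilon>) ^^ q) p = p \<longrightarrow>
                       p = (frac (fst (X \<epsilon>)), snd (X \<epsilon>)))))"
      by (rule S.part1[OF h1 h2])
  next
    assume h: "(\<Sum>k<q. f ((IEM a om d y0 ^^ k) x0)) \<noteq> 0"
    have h1: "(\<Sum>k<q. f (S.xs k)) \<noteq> 0" using h unfolding S.xs_def by simp
    show "\<exists>\<epsilon>0>0. \<exists>U. cyl_nbhd P (x0, y0) U \<and>
        (\<forall>\<epsilon>. 0 < \<bar>\<epsilon>\<bar> \<and> \<bar>\<epsilon>\<bar> < \<epsilon>0 \<longrightarrow>
           (\<forall>p\<in>U. ((Tmap a om d f \<epsilon>) ^^ q) p \<noteq> p))"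
      by (rule S.part2[OF h1])
  qed
qed

end
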